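(* Let $H^0(\mathcal A_\theta^{alg},{}_{\omega}\mathcal A_\theta^{alg\ast})$ be the space of formal series $\varphi=\sum\varphi_{n,m}U_1^nU_2^m$ with $(\omega\cdot a)\varphi=\varphi a$ for all $a\in\mathcal A_\theta^{alg}$, and let $\mathbb Z_3=\langle\omega\rangle$ act on it by applying $\omega$ termwise. Then the subspace of $\mathbb Z_3$-invariant elements satisfies $H^0(\mathcal A_\theta^{alg},{}_{\omega}\mathcal A_\theta^{alg\ast})^{\mathbb Z_3}\cong\mathbb C^3$.
   Context: Let $\theta\in\mathbb R\setminus\mathbb Q$, $\lambda=e^{2\pi i\theta}$, $\lambda^s:=e^{2\pi i\theta s}$. $\mathcal A_\theta^{alg}$ is the complex algebra of finite sums $\sum a_{n,m}U_1^nU_2^m$ with $U_1,U_2$ invertible and $U_2U_1=\lambda U_1U_2$; formal series $\sum_{(n,m)\in\mathbb Z^2}\varphi_{n,m}U_1^nU_2^m$ with arbitrary coefficients form an $\mathcal A_\theta^{alg}$-bimodule via multiplication. $\omega$ is the automorphism with $\omega\cdot U_1=U_2^{-1}$, $\omega\cdot U_2=\lambda^{-1/2}U_1U_2^{-1}$; it has order $3$. Termwise action: $\omega\cdot\sum\varphi_{n,m}U_1^nU_2^m=\sum\varphi_{n,m}\,\omega\cdot(U_1^nU_2^m)$, which is again a formal series. *)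

theory Defs
  imports Complex_Main
begin

text \<open>Elements of the noncommutative torus (algebraic) and formal series are both
  represented by their coefficient functions on the basis U1^n U2^m, indexed by (n,m).\<close>

type_synonym fseries = "int \<times> int \<Rightarrow> complex"

definition lam :: "real \<Rightarrow> real \<Rightarrow> complex" where
  "lam \<theta> s = exp (2 * complex_of_real pi * \<i> * complex_of_real (\<theta> * s))"

definition supp :: "fseries \<Rightarrow> (int \<times> int) set" where
  "supp a = {k. a k \<noteq> 0}"

definition is_alg :: "fseries \<Rightarrow> bool" where
  "is_alg a \<longleftrightarrow> finite (supp a)"

text \<open>Monomial product: U1^n U2^m * U1^p U2^q = lambda^(m p) U1^(n+p) U2^(m+q),
  which follows from U2 U1 = lambda U1 U2.\<close>

definition lmul :: "real \<Rightarrow> fseries \<Rightarrow> fseries \<Rightarrow> fseries" where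
  "lmul \<theta> a \<phi> = (\<lambda>(n,m). \<Sum>(p,q)\<in>supp a.
      a (p,q) * \<phi> (n - p, m - q) * lam \<theta> (of_int (q * (n - p))))"

definition rmul :: "real \<Rightarrow> fseries \<Rightarrow> fseries \<Rightarrow> fseries" where
  "rmul \<theta> \<phi> a = (\<lambda>(n,m). \<Sum>(p,q)\<in>supp a.
      \<phi> (n - p, m - q) * a (p,q) * lam \<theta> (of_int ((m - q) * p)))"

definition mon :: "int \<Rightarrow> int \<Rightarrow> fseries" where
  "mon n m = (\<lambda>k. if k = (n,m) then 1 else 0)"

definition unitA :: fseries where "unitA = mon 0 0"

definition ainv :: "real \<Rightarrow> fseries \<Rightarrow> fseries" where
  "ainv \<theta> x = (THE y. is_alg y \<and> lmul \<theta> x y = unitA \<and> lmul \<theta> y x = unitA)"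

definition zpow :: "real \<Rightarrow> fseries \<Rightarrow> int \<Rightarrow> fseries" where
  "zpow \<theta> x n = (if 0 \<le> n then (lmul \<theta> x ^^ nat n) unitA
                  else (lmul \<theta> (ainv \<theta> x) ^^ nat (- n)) unitA)"

text \<open>omega(U1) = U2^-1, omega(U2) = lambda^(-1/2) U1 U2^-1.\<close>

definition omega1 :: fseries where "omega1 = mon 0 (-1)"

definition omega2 :: "real \<Rightarrow> fseries" where
  "omega2 \<theta> = (\<lambda>k. lam \<theta> (-1/2) * mon 1 (-1) k)"

definition omega_mon :: "real \<Rightarrow> int \<times> int \<Rightarrow> fseries" where
  "omega_mon \<theta> = (\<lambda>(n,m). lmul \<theta> (zpow \<theta> omega1 n) (zpow \<theta> (omega2 \<theta>) m))"

definition omega_alg :: "real \<Rightarrow> fseries \<Rightarrow> fseries" where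
  "omega_alg \<theta> a = (\<lambda>k. \<Sum>j\<in>supp a. a j * omega_mon \<theta> j k)"

text \<open>Termwise action on formal series: the coefficient at k collects the
  (finitely many) terms phi_j omega(U^j) contributing to k.\<close>

definition omega_fs :: "real \<Rightarrow> fseries \<Rightarrow> fseries" where
  "omega_fs \<theta> \<phi> = (\<lambda>k. \<Sum>j\<in>{j. omega_mon \<theta> j k \<noteq> 0}. \<phi> j * omega_mon \<theta> j k)"

definition H0 :: "real \<Rightarrow> fseries set" where
  "H0 \<theta> = {\<phi>. \<forall>a. is_alg a \<longrightarrow> lmul \<theta> (omega_alg \<theta> a) \<phi> = rmul \<theta> \<phi> a}"

definition H0_inv :: "real \<Rightarrow> fseries set" where
  "H0_inv \<theta> = {\<phi> \<in> H0 \<theta>. omega_fs \<theta> \<phi> = \<phi>}"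

end

theory Submission
  imports Defs
begin

lemma lam_mul: "lam t a * lam t b = lam t (a + b)"
  unfolding lam_def by (simp add: exp_add[symmetric] algebra_simps)
lemma lam_nz: "lam t a \<noteq> 0" unfolding lam_def by simp
lemma lam_0: "lam t 0 = 1" unfolding lam_def by simp
lemma lam_inv: "inverse (lam t a) = lam t (-a)"
  unfolding lam_def by (simp add: exp_minus[symmetric])
lemma lam_eq: "a = b \<Longrightarrow> lam t a = lam t b" by simp

definition smon :: "complex \<Rightarrow> int \<Rightarrow> int \<Rightarrow> fseries" where
  "smon c p q = (\<lambda>k. c * mon p q k)"

lemma smon_apply: "smon c p q k = (if k = (p,q) then c else 0)"
  by (simp add: smon_def mon_def)

lemma supp_smon: "c \<noteq> 0 \<Longrightarrow> supp (smon c p q) = {(p,q)}"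
  by (auto simp: supp_def smon_apply)

lemma lmul_smon: "c \<noteq> 0 \<Longrightarrow> lmul t (smon c p q) \<phi> (n,m) = c * \<phi> (n-p,m-q) * lam t (of_int (q*(n-p)))"
  by (simp add: lmul_def supp_smon smon_apply)

lemma lmul_smon_smon: "c \<noteq> 0 \<Longrightarrow> lmul t (smon c p q) (smon d r s) = smon (c*d*lam t (of_int (q*r))) (p+r) (q+s)"
  apply (rule ext) subgoal for k by (cases k) (auto simp: lmul_smon smon_apply)
  done

lemma unitA_smon: "unitA = smon 1 0 0" by (simp add: unitA_def smon_def)

lemma ainv_smon:
  assumes c: "c \<noteq> 0"
  shows "ainv t (smon c p q) = smon (inverse (c * lam t (of_int (-(q*p))))) (-p) (-q)"
  unfolding ainv_def
proof (rule the_equality)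
  let ?d = "inverse (c * lam t (of_int (-(q*p))))"
  have d: "?d \<noteq> 0" using c lam_nz by simp
  show "is_alg (smon ?d (- p) (- q)) \<and> lmul t (smon c p q) (smon ?d (- p) (- q)) = unitA \<and>
        lmul t (smon ?d (- p) (- q)) (smon c p q) = unitA"
    using c d lam_nz[of t] by (simp add: is_alg_def supp_smon lmul_smon_smon unitA_smon field_simps)
next
  fix y assume "is_alg y \<and> lmul t (smon c p q) y = unitA \<and> lmul t y (smon c p q) = unitA"
  then have h: "lmul t (smon c p q) y = unitA" by blast
  show "y = smon (inverse (c * lam t (of_int (-(q*p))))) (-p) (-q)"
  proof (rule ext)
    fix k :: "int \<times> int"
    obtain a b where k: "k = (a,b)" by (cases k)
    have "lmul t (smon c p q) y (a+p,b+q) = unitA (a+p,b+q)" using h by simp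
    then have "c * y (a,b) * lam t (of_int (q*a)) = (if (a,b) = (-p,-q) then 1 else 0)"
      using c by (auto simp: lmul_smon unitA_smon smon_apply)
    then show "y k = smon (inverse (c * lam t (of_int (-(q*p))))) (-p) (-q) k"
      using c lam_nz[of t] by (auto simp: k smon_apply field_simps)
  qed
qed


lemma omega1_smon: "omega1 = smon 1 0 (-1)" by (simp add: omega1_def smon_def)
lemma omega2_smon: "omega2 t = smon (lam t (-1/2)) 1 (-1)" by (simp add: omega2_def smon_def)

lemma pow1: "(lmul t (smon 1 0 (-1)) ^^ k) unitA = smon 1 0 (- int k)"
  by (induction k) (simp_all add: unitA_smon lmul_smon_smon lam_0)

lemma pow1': "(lmul t (smon 1 0 1) ^^ k) unitA = smon 1 0 (int k)"
  by (induction k) (simp_all add: unitA_smon lmul_smon_smon lam_0)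

lemma zpow1: "zpow t omega1 n = smon 1 0 (-n)"
proof (cases "0 \<le> n")
  case True then show ?thesis by (simp add: zpow_def omega1_smon pow1)
next
  case False
  have "ainv t (smon 1 0 (-1)) = smon 1 0 1" by (simp add: ainv_smon lam_0)
  then show ?thesis using False by (simp add: zpow_def omega1_smon pow1')
qed

lemma pow2: "(lmul t (smon (lam t (-1/2)) 1 (-1)) ^^ k) unitA
   = smon (lam t (-(real k ^ 2)/2)) (int k) (- int k)"
proof (induction k)
  case 0 then show ?case by (simp add: unitA_smon lam_0)
next
  case (Suc k)
  have e: "lam t (-1/2) * lam t (-(real k ^ 2)/2) * lam t (of_int (- (int k)))
       = lam t (-(real (Suc k) ^ 2)/2)"
    by (simp add: lam_mul power2_eq_square field_simps)
  show ?case using Suc lam_nz[of t] by (simp add: lmul_smon_smon lam_mul power2_eq_square field_simps)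
qed

lemma pow2': "(lmul t (smon (lam t (-1/2)) (-1) 1) ^^ k) unitA
   = smon (lam t (-(real k ^ 2)/2)) (- int k) (int k)"
proof (induction k)
  case 0 then show ?case by (simp add: unitA_smon lam_0)
next
  case (Suc k)
  have e: "lam t (-1/2) * lam t (-(real k ^ 2)/2) * lam t (of_int (- (int k)))
       = lam t (-(real (Suc k) ^ 2)/2)"
    by (simp add: lam_mul power2_eq_square field_simps)
  show ?case using Suc lam_nz[of t] by (simp add: lmul_smon_smon lam_mul power2_eq_square field_simps)
qed

lemma zpow2: "zpow t (omega2 t) m = smon (lam t (-(real_of_int m ^ 2)/2)) m (-m)"
proof (cases "0 \<le> m")
  case True
  define k where "k = nat m"
  have "m = int k" using True k_def by simp
  then show ?thesis using True pow2[where t=t and k=k] by (simp add: zpow_def omega2_smon)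
next
  case False
  have i: "inverse (lam t (-1/2) * lam t (of_int (- (-1 * 1)))) = lam t (-1/2)"
    by (simp add: lam_mul lam_inv)
  have "ainv t (smon (lam t (-1/2)) 1 (-1)) = smon (lam t (-1/2)) (-1) 1"
    using lam_nz[of t] by (simp add: ainv_smon lam_inv lam_mul)
  moreover define k where "k = nat (-m)"
  moreover have "m = - int k" using False k_def by simp
  ultimately show ?thesis using False pow2'[where t=t and k=k] by (simp add: zpow_def omega2_smon)
qed

definition Cf :: "real \<Rightarrow> int \<times> int \<Rightarrow> complex" where
  "Cf t = (\<lambda>(p,q). lam t (- (of_int p * of_int q) -(real_of_int q ^ 2)/2))"

lemma Cf_nz: "Cf t j \<noteq> 0" by (cases j) (simp add: Cf_def lam_nz)

lemma omega_mon_eq: "omega_mon t (p,q) = smon (Cf t (p,q)) q (-p-q)"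
proof -
  have e: "1 * lam t (-(real_of_int q ^ 2)/2) * lam t (of_int (- p * q)) = Cf t (p,q)"
    by (simp add: Cf_def lam_mul algebra_simps)
  show ?thesis by (simp add: omega_mon_def zpow1 zpow2 lmul_smon_smon Cf_def lam_mul algebra_simps)
qed


definition sig :: "int \<times> int \<Rightarrow> int \<times> int" where "sig = (\<lambda>(x,y). (-x-y, x))"
definition tau :: "int \<times> int \<Rightarrow> int \<times> int" where "tau = (\<lambda>(p,q). (q, -p-q))"

lemma tau_sig: "tau (sig k) = k" by (cases k) (simp add: tau_def sig_def)
lemma sig_tau: "sig (tau k) = k" by (cases k) (simp add: tau_def sig_def)

lemma omega_mon_apply: "omega_mon t j k = (if j = sig k then Cf t j else 0)"
proof -
  obtain p q where j: "j = (p,q)" by (cases j)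
  have "k = (q, -p-q) \<longleftrightarrow> j = sig k"
    using j by (cases k) (auto simp: sig_def)
  then show ?thesis by (simp add: j omega_mon_eq smon_apply)
qed

lemma omega_alg_apply: "is_alg a \<Longrightarrow> omega_alg t a k = a (sig k) * Cf t (sig k)"
proof -
  assume "is_alg a"
  then have f: "finite (supp a)" by (simp add: is_alg_def)
  have "omega_alg t a k = (\<Sum>j\<in>supp a. if j = sig k then a j * Cf t j else 0)"
    unfolding omega_alg_def by (rule sum.cong) (auto simp: omega_mon_apply)
  also have "\<dots> = (if sig k \<in> supp a then a (sig k) * Cf t (sig k) else 0)"
    using f by (simp add: sum.delta')
  also have "\<dots> = a (sig k) * Cf t (sig k)" by (auto simp: supp_def)
  finally show ?thesis .
qed

lemma omega_fs_apply: "omega_fs t \<phi> k = \<phi> (sig k) * Cf t (sig k)"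
proof -
  have s: "{j. omega_mon t j k \<noteq> 0} = {sig k}"
    by (auto simp: omega_mon_apply Cf_nz)
  show ?thesis unfolding omega_fs_def s by (simp add: omega_mon_apply)
qed

definition R :: "real \<Rightarrow> fseries \<Rightarrow> bool" where
  "R t \<phi> \<longleftrightarrow> (\<forall>p q n m. Cf t (p,q) * \<phi> (n-q, m+p+q) * lam t (of_int ((-p-q)*(n-q)))
       = \<phi> (n-p, m-q) * lam t (of_int ((m-q)*p)))"

lemma lmul_omega_alg:
  assumes "is_alg a"
  shows "lmul t (omega_alg t a) \<phi> (n,m) = (\<Sum>(p,q)\<in>supp a.
     a (p,q) * (Cf t (p,q) * \<phi> (n-q, m+p+q) * lam t (of_int ((-p-q)*(n-q)))))"
proof -
  have s: "supp (omega_alg t a) = tau ` supp a"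
  proof
    show "supp (omega_alg t a) \<subseteq> tau ` supp a"
    proof
      fix k assume "k \<in> supp (omega_alg t a)"
      then have "sig k \<in> supp a" using assms by (simp add: supp_def omega_alg_apply)
      then show "k \<in> tau ` supp a" by (metis image_eqI tau_sig)
    qed
  next
    show "tau ` supp a \<subseteq> supp (omega_alg t a)"
      using assms by (auto simp: supp_def omega_alg_apply sig_tau Cf_nz)
  qed
  have inj: "inj_on tau (supp a)" by (metis inj_on_inverseI sig_tau)
  have "lmul t (omega_alg t a) \<phi> (n,m) = (\<Sum>(p,q)\<in>tau ` supp a.
      omega_alg t a (p,q) * \<phi> (n - p, m - q) * lam t (of_int (q * (n - p))))"
    by (simp add: lmul_def s)
  also have "\<dots> = (\<Sum>j\<in>supp a. (\<lambda>(p,q). omega_alg t a (p,q) * \<phi> (n - p, m - q) * lam t (of_int (q * (n - p)))) (tau j))"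
    using inj by (simp add: sum.reindex)
  also have "\<dots> = (\<Sum>(p,q)\<in>supp a.
     a (p,q) * (Cf t (p,q) * \<phi> (n-q, m+p+q) * lam t (of_int ((-p-q)*(n-q)))))"
    by (rule sum.cong) (auto simp: tau_def omega_alg_apply[OF assms] sig_def algebra_simps)
  finally show ?thesis .
qed

lemma H0_iff: "\<phi> \<in> H0 t \<longleftrightarrow> R t \<phi>"
proof
  assume h: "\<phi> \<in> H0 t"
  show "R t \<phi>" unfolding R_def
  proof (intro allI)
    fix p q n m
    have a: "is_alg (smon 1 p q)" by (simp add: is_alg_def supp_smon)
    have "lmul t (omega_alg t (smon 1 p q)) \<phi> (n,m) = rmul t \<phi> (smon 1 p q) (n,m)"
      using h a by (simp add: H0_def)
    then show "Cf t (p,q) * \<phi> (n-q, m+p+q) * lam t (of_int ((-p-q)*(n-q)))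
       = \<phi> (n-p, m-q) * lam t (of_int ((m-q)*p))"
      by (simp add: lmul_omega_alg[OF a] rmul_def supp_smon smon_apply)
  qed
next
  assume r: "R t \<phi>"
  show "\<phi> \<in> H0 t" unfolding H0_def
  proof (intro CollectI allI impI ext)
    fix a :: fseries and k :: "int \<times> int" assume a: "is_alg a"
    obtain n m where k: "k = (n,m)" by (cases k)
    show "lmul t (omega_alg t a) \<phi> k = rmul t \<phi> a k"
      unfolding k lmul_omega_alg[OF a] rmul_def prod.case
      by (rule sum.cong) (use r in \<open>auto simp: R_def\<close>)
  qed
qed


definition Qf :: "int \<Rightarrow> int \<Rightarrow> real" where
  "Qf x y = (real_of_int x ^ 2 + 4 * real_of_int x * real_of_int y + real_of_int y ^ 2) / 6"

definition ebas :: "real \<Rightarrow> int \<Rightarrow> fseries" where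
  "ebas t i = (\<lambda>(x,y). if (x - y) mod 3 = i then lam t (Qf x y) else 0)"

lemma ebas_R: "R t (ebas t i)"
  unfolding R_def
proof (intro allI)
  fix p q n m :: int
  have md: "(n - q - (m + p + q)) mod 3 = (n - p - (m - q)) mod 3" by presburger
  have ex: "(- (real_of_int p * real_of_int q) - real_of_int q ^ 2 / 2) + Qf (n-q) (m+p+q)
      + real_of_int ((-p-q)*(n-q)) = Qf (n-p) (m-q) + real_of_int ((m-q)*p)"
    unfolding Qf_def by (simp add: power2_eq_square field_simps)
  show "Cf t (p,q) * ebas t i (n-q, m+p+q) * lam t (of_int ((-p-q)*(n-q)))
       = ebas t i (n-p, m-q) * lam t (of_int ((m-q)*p))"
    using md ex by (simp add: ebas_def Cf_def lam_mul)
qed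

lemma ebas_inv: "ebas t i (sig k) * Cf t (sig k) = ebas t i k"
proof -
  obtain a b where k: "k = (a,b)" by (cases k)
  have md: "(-a-b-a) mod 3 = (a - b) mod 3" by presburger
  have ex: "Qf (-a-b) a + (- (real_of_int (-a-b) * real_of_int a) - real_of_int a ^ 2 / 2) = Qf a b"
    unfolding Qf_def by (simp add: power2_eq_square field_simps)
  show ?thesis using md ex by (simp add: k sig_def ebas_def Cf_def lam_mul)
qed


lemma lin3: "(A::complex) * x1 * L = y1 * B \<Longrightarrow> A * x2 * L = y2 * B \<Longrightarrow> A * x3 * L = y3 * B \<Longrightarrow>
   A * (c1*x1 + c2*x2 + c3*x3) * L = (c1*y1 + c2*y2 + c3*y3) * B"
proof -
  assume h: "A * x1 * L = y1 * B" "A * x2 * L = y2 * B" "A * x3 * L = y3 * B"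
  have "A * (c1*x1 + c2*x2 + c3*x3) * L = c1*(A*x1*L) + c2*(A*x2*L) + c3*(A*x3*L)" by (simp add: algebra_simps)
  also have "\<dots> = (c1*y1 + c2*y2 + c3*y3) * B" using h by (simp add: algebra_simps)
  finally show ?thesis .
qed

lemma R_comb: "R t (\<lambda>k. c1 * ebas t 0 k + c2 * ebas t 1 k + c3 * ebas t 2 k)"
  unfolding R_def
  by (intro allI lin3) (rule ebas_R[unfolded R_def, rule_format])+

lemma R_diff: "R t \<phi> \<Longrightarrow> R t \<psi> \<Longrightarrow> R t (\<lambda>k. \<phi> k - \<psi> k)"
  unfolding R_def by (simp add: algebra_simps)

lemma R_zero:
  assumes r: "R t \<psi>" and z: "\<psi> (0,0) = 0" "\<psi> (1,0) = 0" "\<psi> (2,0) = 0"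
  shows "\<psi> k = 0"
proof -
  obtain x y where k: "k = (x,y)" by (cases k)
  define i where "i = (x - y) mod 3"
  define q where "q = (y - x + i) div 3"
  define p where "p = y - 2*q"
  have i3: "i = 0 \<or> i = 1 \<or> i = 2" unfolding i_def by presburger
  have q3: "3 * q = y - x + i" unfolding q_def i_def by presburger
  have zi: "\<psi> (i, 0) = 0" using i3 z by auto
  have "Cf t (p,q) * \<psi> (i+p-q, q+p+q) * lam t (of_int ((-p-q)*(i+p-q)))
       = \<psi> (i+p-p, q-q) * lam t (of_int ((q-q)*p))"
    using r unfolding R_def by (metis add_diff_cancel_right')
  moreover have hx: "i+p-q = x" and hy: "q+p+q = y" using q3 p_def by linarith+
  ultimately have "Cf t (p,q) * \<psi> (x, y) * lam t (of_int ((-p-q)*x)) = 0"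
    using zi by simp
  then show ?thesis using Cf_nz lam_nz k by (simp)
qed

theorem mainTheorem4:
  fixes \<theta> :: real
  assumes "\<theta> \<notin> \<rat>"
  shows "\<exists>e1 e2 e3 :: fseries.
           bij_betw (\<lambda>(c1, c2, c3). (\<lambda>k. c1 * e1 k + c2 * e2 k + c3 * e3 k))
                    (UNIV :: (complex \<times> complex \<times> complex) set) (H0_inv \<theta>)"
proof (intro exI)
  let ?e = "ebas \<theta>"
  let ?f = "\<lambda>(c1, c2, c3). (\<lambda>k. c1 * ?e 0 k + c2 * ?e 1 k + c3 * ?e 2 k)"
  have e00: "?e j (i,0) = (if i = j then lam \<theta> (Qf i 0) else 0)" if "i \<in> {0,1,2}" "j \<in> {0,1,2}" for i j
    using that by (auto simp: ebas_def)
  show "bij_betw ?f UNIV (H0_inv \<theta>)"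
    unfolding bij_betw_def
  proof (intro conjI)
    show "inj_on ?f UNIV"
    proof (rule inj_onI)
      fix u v :: "complex \<times> complex \<times> complex"
      assume h: "?f u = ?f v"
      obtain a1 a2 a3 where u: "u = (a1,a2,a3)" by (cases u)
      obtain b1 b2 b3 where v: "v = (b1,b2,b3)" by (cases v)
      have h': "\<And>k. a1 * ?e 0 k + a2 * ?e 1 k + a3 * ?e 2 k = b1 * ?e 0 k + b2 * ?e 1 k + b3 * ?e 2 k"
        using h u v by (metis (no_types, lifting) case_prod_conv)
      have "a1 = b1" using h'[of "(0,0)"] e00[of 0] lam_nz[of \<theta>] by simp
      moreover have "a2 = b2" using h'[of "(1,0)"] e00[of 1] lam_nz[of \<theta>] by simp
      moreover have "a3 = b3" using h'[of "(2,0)"] e00[of 2] lam_nz[of \<theta>] by simp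
      ultimately show "u = v" using u v by simp
    qed
  next
    show "?f ` UNIV = H0_inv \<theta>"
    proof
      show "?f ` UNIV \<subseteq> H0_inv \<theta>"
      proof
        fix \<phi> assume "\<phi> \<in> ?f ` UNIV"
        then obtain c1 c2 c3 where ph: "\<phi> = (\<lambda>k. c1 * ?e 0 k + c2 * ?e 1 k + c3 * ?e 2 k)" by auto
        have "\<phi> \<in> H0 \<theta>" using R_comb H0_iff ph by simp
        moreover have "omega_fs \<theta> \<phi> = \<phi>"
        proof
          fix k
          show "omega_fs \<theta> \<phi> k = \<phi> k"
            unfolding omega_fs_apply ph
            using ebas_inv[of \<theta> 0 k] ebas_inv[of \<theta> 1 k] ebas_inv[of \<theta> 2 k]
            by (simp add: algebra_simps)
        qed
        ultimately show "\<phi> \<in> H0_inv \<theta>" by (simp add: H0_inv_def)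
      qed
    next
      show "H0_inv \<theta> \<subseteq> ?f ` UNIV"
      proof
        fix \<phi> assume "\<phi> \<in> H0_inv \<theta>"
        then have r: "R \<theta> \<phi>" by (simp add: H0_inv_def H0_iff)
        define c where "c i = \<phi> (i,0) * lam \<theta> (- Qf i 0)" for i
        let ?g = "\<lambda>k. c 0 * ?e 0 k + c 1 * ?e 1 k + c 2 * ?e 2 k"
        have rd: "R \<theta> (\<lambda>k. \<phi> k - ?g k)" by (rule R_diff[OF r R_comb])
        have ci: "c i * lam \<theta> (Qf i 0) = \<phi> (i,0)" for i
          by (simp add: c_def lam_mul lam_0)
        have "\<phi> k - ?g k = 0" for k
          by (rule R_zero[OF rd]) (simp_all add: ebas_def ci)
        then have "\<phi> = ?g" by auto
        then show "\<phi> \<in> ?f ` UNIV" by (intro image_eqI[where x="(c 0, c 1, c 2)"]) auto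
      qed
    qed
  qed
qed

end
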